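(* Let $\mathcal{A}\subseteq 2^{[n]}$ be an arbitrary family of sets. For $A\in\mathcal{A}$ let $c(A)$ be the maximum $k$ such that $A$ belongs to a $k$-chain consisting of sets from $\mathcal{A}$. Then \[ \sum_{A\in\mathcal{A}} \frac{1}{\binom{n}{|A|}\,c(A)} \le 1, \] and equality holds if and only if $\mathcal{A}$ is a nonempty union of complete levels, i.e. $\mathcal{A}=\bigcup_{i\in I}\binom{[n]}{i}$ for some nonempty $I\subseteq\{0,1,\dots,n\}$.
   Context: $[n]=\{1,\dots,n\}$ and $2^{[n]}$ is its power set. A $k$-chain is a collection of $k$ sets $A_1\subsetneq A_2\subsetneq\cdots\subsetneq A_k$. $\binom{[n]}{i}$ denotes the family of all $i$-element subsets of $[n]$ (the $i$-th level). *)

theory Defs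
  imports Complex_Main
begin

definition is_chain_in :: "'a set set \<Rightarrow> 'a set list \<Rightarrow> bool" where
  "is_chain_in F cs \<longleftrightarrow> set cs \<subseteq> F \<and> sorted_wrt (\<subset>) cs"

definition chain_rank :: "'a set set \<Rightarrow> 'a set \<Rightarrow> nat" where
  "chain_rank F A = Max {length cs | cs. is_chain_in F cs \<and> A \<in> set cs}"

definition level :: "nat \<Rightarrow> nat \<Rightarrow> nat set set" where
  "level n i = {S. S \<subseteq> {1..n} \<and> card S = i}"

end

theory Submission imports Defs "HOL-Combinatorics.Multiset_Permutations" begin


lemma psub_chain_distinct: "sorted_wrt (\<subset>) cs \<Longrightarrow> distinct cs"
  by (induction cs) auto

lemma chain_len_le_card:
  assumes "finite F" "is_chain_in F cs" shows "length cs \<le> card F"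
proof -
  have "distinct cs" using assms(2) psub_chain_distinct by (auto simp: is_chain_in_def)
  then have "length cs = card (set cs)" by (simp add: distinct_card)
  also have "\<dots> \<le> card F" using assms by (auto simp: is_chain_in_def intro: card_mono)
  finally show ?thesis .
qed

lemma rank_set_finite:
  assumes "finite F"
  shows "finite {length cs | cs. is_chain_in F cs \<and> A \<in> set cs}"
  by (rule finite_subset[of _ "{..card F}"]) (auto dest: chain_len_le_card[OF assms])

lemma rank_ge:
  assumes "finite F" "is_chain_in F cs" "A \<in> set cs"
  shows "length cs \<le> chain_rank F A"
  unfolding chain_rank_def using assms rank_set_finite[OF assms(1), of A]
  by (intro Max_ge) auto

lemma rank_le:
  assumes "finite F" "A \<in> F" "\<And>cs. is_chain_in F cs \<Longrightarrow> length cs \<le> K"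
  shows "chain_rank F A \<le> K"
proof -
  have "is_chain_in F [A]" using assms(2) by (simp add: is_chain_in_def)
  then show ?thesis unfolding chain_rank_def using assms rank_set_finite[OF assms(1), of A]
    by (subst Max_le_iff) auto
qed

lemma card_take_set:
  assumes "distinct xs" "k \<le> length xs" shows "card (set (take k xs)) = k"
  using assms by (simp add: distinct_card)

lemma take_psubset:
  assumes "distinct xs" "i < j" "j \<le> length xs"
  shows "set (take i xs) \<subset> set (take j xs)"
proof -
  have "set (take i xs) \<subseteq> set (take j xs)" using assms by (simp add: set_take_subset_set_take)
  moreover have "card (set (take i xs)) \<noteq> card (set (take j xs))"
    using assms by (simp add: card_take_set)
  ultimately show ?thesis by auto
qed

definition Ssig :: "nat set set \<Rightarrow> nat list \<Rightarrow> nat set set" where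
  "Ssig F \<sigma> = {A\<in>F. set (take (card A) \<sigma>) = A}"

definition fsig :: "nat set set \<Rightarrow> nat list \<Rightarrow> real" where
  "fsig F \<sigma> = (\<Sum>A\<in>Ssig F \<sigma>. 1 / real (chain_rank F A))"

lemma perm_props:
  assumes "\<sigma> \<in> permutations_of_set {1..n}"
  shows "distinct \<sigma>" "length \<sigma> = n" "set \<sigma> = {1..n}"
  using assms by (auto simp: permutations_of_set_def distinct_card[symmetric])

lemma sig_chain:
  assumes F: "F \<subseteq> Pow {1..n}" and s: "\<sigma> \<in> permutations_of_set {1..n}" and A: "A \<in> Ssig F \<sigma>"
  shows "card (Ssig F \<sigma>) \<le> chain_rank F A"
proof -
  have fin: "finite F" using F by (rule finite_subset) auto
  note p = perm_props[OF s]
  define cs where "cs = map (\<lambda>k. set (take k \<sigma>)) (filter (\<lambda>k. set (take k \<sigma>) \<in> F) [0..<Suc n])"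
  have "sorted_wrt (\<lambda>i j. set (take i \<sigma>) \<subset> set (take j \<sigma>)) [0..<Suc n]"
    apply (rule sorted_wrt_mono_rel[OF _ sorted_wrt_upt])
    apply (rule take_psubset) using p by auto
  then have sw: "sorted_wrt (\<subset>) cs" unfolding cs_def sorted_wrt_map by (rule sorted_wrt_filter)
  have setcs: "set cs = Ssig F \<sigma>"
  proof
    show "set cs \<subseteq> Ssig F \<sigma>" using p by (auto simp: cs_def Ssig_def card_take_set)
  next
    show "Ssig F \<sigma> \<subseteq> set cs"
    proof
      fix B assume B: "B \<in> Ssig F \<sigma>"
      then have "B \<in> F" "set (take (card B) \<sigma>) = B" by (auto simp: Ssig_def)
      moreover have "card B \<le> n" using \<open>B \<in> F\<close> F
        by (metis PowD card_atLeastAtMost card_mono diff_Suc_1 finite_atLeastAtMost subsetD)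
      ultimately have "card B \<in> set (filter (\<lambda>k. set (take k \<sigma>) \<in> F) [0..<Suc n])"
        by (simp only: set_filter set_upt) (simp add: less_Suc_eq_le)
      then have "set (take (card B) \<sigma>) \<in> set cs" unfolding cs_def set_map by (rule imageI)
      then show "B \<in> set cs" using \<open>set (take (card B) \<sigma>) = B\<close> by simp
    qed
  qed
  have ch: "is_chain_in F cs" using sw setcs by (auto simp: is_chain_in_def Ssig_def)
  have "card (Ssig F \<sigma>) \<le> length cs" using setcs card_length by metis
  also have "\<dots> \<le> chain_rank F A" using rank_ge[OF fin ch] A setcs by auto
  finally show ?thesis .
qed

lemma fsig_le1:
  assumes F: "F \<subseteq> Pow {1..n}" and s: "\<sigma> \<in> permutations_of_set {1..n}"
  shows "fsig F \<sigma> \<le> 1" "fsig F \<sigma> = 1 \<Longrightarrow> Ssig F \<sigma> \<noteq> {} \<and> (\<forall>A\<in>Ssig F \<sigma>. chain_rank F A = card (Ssig F \<sigma>))"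
proof -
  let ?S = "Ssig F \<sigma>" let ?m = "card ?S"
  have fin: "finite F" using F by (rule finite_subset) auto
  have finS: "finite ?S" unfolding Ssig_def using fin by auto
  have ge: "\<And>A. A \<in> ?S \<Longrightarrow> ?m \<le> chain_rank F A" using sig_chain[OF F s] by blast
  have term_le: "1 / real (chain_rank F A) \<le> 1 / real ?m" if "A \<in> ?S" for A
  proof -
    have "?m > 0" using that finS card_gt_0_iff by blast
    then show ?thesis using ge[OF that] by (simp add: frac_le)
  qed
  have summ: "(\<Sum>A\<in>?S. 1 / real ?m) \<le> 1"
    by (cases "?m = 0") auto
  show le: "fsig F \<sigma> \<le> 1" unfolding fsig_def
    using sum_mono[of ?S "\<lambda>A. 1/real(chain_rank F A)" "\<lambda>A. 1/real ?m", OF term_le] summ by linarith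
  assume eq: "fsig F \<sigma> = 1"
  have ne: "?S \<noteq> {}" using eq by (auto simp: fsig_def)
  then have m0: "?m > 0" using finS by auto
  have "(\<Sum>A\<in>?S. 1 / real ?m - 1 / real (chain_rank F A)) = 0"
    using eq m0 by (simp add: sum_subtractf fsig_def)
  then have "\<forall>A\<in>?S. 1 / real ?m - 1 / real (chain_rank F A) = 0"
    using sum_nonneg_eq_0_iff[OF finS, of "\<lambda>A. 1 / real ?m - 1 / real (chain_rank F A)"] term_le by auto
  then have "\<forall>A\<in>?S. chain_rank F A = ?m"
    by (simp add: divide_cancel_left)
  with ne show "?S \<noteq> {} \<and> (\<forall>A\<in>?S. chain_rank F A = ?m)" by blast
qed

lemma count_prefix:
  assumes A: "A \<subseteq> {1..n}"
  shows "card {\<sigma>\<in>permutations_of_set {1..n}. set (take (card A) \<sigma>) = A} = fact (card A) * fact (n - card A)"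
proof -
  let ?k = "card A"
  let ?PA = "permutations_of_set A" and ?PB = "permutations_of_set ({1..n} - A)"
  have finA: "finite A" using A finite_subset by blast
  have eq: "{\<sigma>\<in>permutations_of_set {1..n}. set (take ?k \<sigma>) = A} = (\<lambda>(ys,zs). ys @ zs) ` (?PA \<times> ?PB)"
  proof
    show "(\<lambda>(ys,zs). ys @ zs) ` (?PA \<times> ?PB) \<subseteq> {\<sigma>\<in>permutations_of_set {1..n}. set (take ?k \<sigma>) = A}"
    proof clarify
      fix ys zs assume y: "ys \<in> ?PA" and z: "zs \<in> ?PB"
      have ly: "length ys = ?k" using length_finite_permutations_of_set[OF y] .
      show "ys @ zs \<in> permutations_of_set {1..n} \<and> set (take ?k (ys @ zs)) = A"
        using y z A ly by (auto simp: permutations_of_set_def)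
    qed
  next
    show "{\<sigma>\<in>permutations_of_set {1..n}. set (take ?k \<sigma>) = A} \<subseteq> (\<lambda>(ys,zs). ys @ zs) ` (?PA \<times> ?PB)"
    proof clarify
      fix \<sigma> assume s: "\<sigma> \<in> permutations_of_set {1..n}" and t: "set (take ?k \<sigma>) = A"
      note p = perm_props[OF s]
      have d: "distinct (take ?k \<sigma> @ drop ?k \<sigma>)" using p by simp
      have "set (take ?k \<sigma>) \<union> set (drop ?k \<sigma>) = {1..n}" using p
        by (metis append_take_drop_id set_append)
      moreover have "set (take ?k \<sigma>) \<inter> set (drop ?k \<sigma>) = {}" using d by (metis distinct_append)
      ultimately have "set (drop ?k \<sigma>) = {1..n} - A" using t by auto
      then have "(take ?k \<sigma>, drop ?k \<sigma>) \<in> ?PA \<times> ?PB" using t p by (auto simp: permutations_of_set_def)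
      then show "\<sigma> \<in> (\<lambda>(ys,zs). ys @ zs) ` (?PA \<times> ?PB)"
        by (rule image_eqI[rotated]) simp
    qed
  qed
  have inj: "inj_on (\<lambda>(ys,zs). ys @ zs) (?PA \<times> ?PB)"
  proof (rule inj_onI, clarify)
    fix ys zs ys' zs' assume "ys \<in> ?PA" "zs \<in> ?PB" "ys' \<in> ?PA" "zs' \<in> ?PB" "ys @ zs = ys' @ zs'"
    moreover have "length ys = length ys'"
      using \<open>ys \<in> ?PA\<close> \<open>ys' \<in> ?PA\<close> length_finite_permutations_of_set by metis
    ultimately show "ys = ys' \<and> zs = zs'" by simp
  qed
  have "card ({1..n} - A) = n - ?k" using A finA by (simp add: card_Diff_subset)
  then show ?thesis unfolding eq using card_image[OF inj] finA
    by (simp add: card_cartesian_product)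
qed

lemma key_identity:
  assumes F: "F \<subseteq> Pow {1..n}"
  shows "(\<Sum>A\<in>F. 1 / (real (n choose card A) * real (chain_rank F A))) * fact n
         = (\<Sum>\<sigma>\<in>permutations_of_set {1..n}. fsig F \<sigma>)"
proof -
  let ?P = "permutations_of_set {1..n}"
  have fin: "finite F" using F by (rule finite_subset) auto
  have "(\<Sum>\<sigma>\<in>?P. fsig F \<sigma>) = (\<Sum>\<sigma>\<in>?P. \<Sum>A\<in>F. if set (take (card A) \<sigma>) = A then 1 / real (chain_rank F A) else 0)"
    unfolding fsig_def Ssig_def using fin by (simp add: sum.inter_filter)
  also have "\<dots> = (\<Sum>A\<in>F. \<Sum>\<sigma>\<in>?P. if set (take (card A) \<sigma>) = A then 1 / real (chain_rank F A) else 0)"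
    by (rule sum.swap)
  also have "\<dots> = (\<Sum>A\<in>F. real (card {\<sigma>\<in>?P. set (take (card A) \<sigma>) = A}) / real (chain_rank F A))"
    by (rule sum.cong[OF refl]) (simp add: sum.inter_filter[symmetric])
  also have "\<dots> = (\<Sum>A\<in>F. fact (card A) * fact (n - card A) / real (chain_rank F A))"
  proof (rule sum.cong[OF refl])
    fix A assume "A \<in> F"
    then have "A \<subseteq> {1..n}" using F by auto
    from count_prefix[OF this] show "real (card {\<sigma>\<in>?P. set (take (card A) \<sigma>) = A}) / real (chain_rank F A)
      = fact (card A) * fact (n - card A) / real (chain_rank F A)" by (simp only: of_nat_mult of_nat_fact)
  qed
  also have "\<dots> = (\<Sum>A\<in>F. 1 / (real (n choose card A) * real (chain_rank F A))) * fact n"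
    unfolding sum_distrib_right
  proof (rule sum.cong[OF refl])
    fix A assume "A \<in> F"
    then have "card A \<le> n" using F
      by (metis PowD card_atLeastAtMost card_mono diff_Suc_1 finite_atLeastAtMost subsetD)
    then have "fact (card A) * fact (n - card A) * real (n choose card A) = fact n"
      using binomial_fact_lemma[of "card A" n] by (metis of_nat_fact of_nat_mult)
    moreover have "real (n choose card A) > 0" using \<open>card A \<le> n\<close> by simp
    ultimately show "fact (card A) * fact (n - card A) / real (chain_rank F A) =
        1 / (real (n choose card A) * real (chain_rank F A)) * fact n"
      by (simp add: divide_simps)
  qed
  finally show ?thesis by simp
qed

lemma swap_closed:
  assumes F: "F \<subseteq> Pow {1..n}"
    and all: "\<forall>\<sigma>\<in>permutations_of_set {1..n}. fsig F \<sigma> = 1"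
    and A: "A \<in> F" and a: "a \<in> A" and b: "b \<in> {1..n}" "b \<notin> A"
  shows "insert b (A - {a}) \<in> F"
proof (rule ccontr)
  define B where "B = insert b (A - {a})"
  assume nB: "insert b (A - {a}) \<notin> F"
  then have nB': "B \<notin> F" by (simp add: B_def)
  let ?P = "permutations_of_set {1..n}"
  define D where "D = A - {a}"
  have Asub: "A \<subseteq> {1..n}" using A F by auto
  have finD: "finite D" using Asub unfolding D_def by (meson finite_Diff finite_atLeastAtMost finite_subset)
  obtain d where d: "set d = D" "distinct d" using finite_distinct_list[OF finD] by blast
  obtain r where r: "set r = {1..n} - insert b A" "distinct r"
    using finite_distinct_list[of "{1..n} - insert b A"] by auto
  define s1 where "s1 = d @ a # b # r"
  define s2 where "s2 = d @ b # a # r"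
  have ab: "a \<noteq> b" using a b by auto
  have s1P: "s1 \<in> ?P" using d r a b Asub ab unfolding s1_def D_def by (auto simp: permutations_of_set_def)
  have s2P: "s2 \<in> ?P" using d r a b Asub ab unfolding s2_def D_def by (auto simp: permutations_of_set_def)
  define k where "k = length d"
  have cardA: "card A = Suc k" using d a Asub
    by (metis D_def k_def card_Suc_Diff1 distinct_card finite_atLeastAtMost finite_subset)
  have cardB: "card B = Suc k" using d b unfolding B_def D_def k_def
    by (metis D_def cardA card_insert_disjoint finD insert_Diff_single insert_absorb insert_iff k_def a Diff_iff)
  have pre_eq: "set (take j s1) = set (take j s2)" if "j \<noteq> Suc k" for j
  proof (cases "j \<le> k")
    case True then show ?thesis by (simp add: s1_def s2_def k_def)
  next
    case False
    then have "j - k = Suc (Suc (j - k - 2))" using that by auto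
    then show ?thesis by (simp add: s1_def s2_def k_def[symmetric] insert_commute)
  qed
  have t1: "set (take (Suc k) s1) = A" using d a unfolding s1_def k_def D_def by auto
  have t2: "set (take (Suc k) s2) = B" using d unfolding s2_def k_def D_def B_def by auto
  have S2: "Ssig F s2 = Ssig F s1 - {A}"
  proof -
    have "C \<in> Ssig F s2 \<longleftrightarrow> C \<in> Ssig F s1 - {A}" for C
    proof (cases "card C = Suc k")
      case True then show ?thesis using t1 t2 nB' by (auto simp: Ssig_def)
    next
      case False then show ?thesis using pre_eq[OF False] cardA by (auto simp: Ssig_def)
    qed
    then show ?thesis by blast
  qed
  have AS1: "A \<in> Ssig F s1" using A t1 cardA by (simp add: Ssig_def)
  note h1 = fsig_le1(2)[OF F s1P] note h2 = fsig_le1(2)[OF F s2P]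
  from h2 all s2P obtain C where C: "C \<in> Ssig F s2" "chain_rank F C = card (Ssig F s2)" by auto
  have finF: "finite F" using F by (rule finite_subset) auto
  have fin: "finite (Ssig F s1)" unfolding Ssig_def using finF by auto
  have "C \<in> Ssig F s1" using C S2 by auto
  then have "chain_rank F C = card (Ssig F s1)" using h1 all s1P by auto
  moreover have "card (Ssig F s2) = card (Ssig F s1) - 1" using S2 AS1 fin by simp
  moreover have "card (Ssig F s1) > 0" using AS1 fin card_gt_0_iff by blast
  ultimately show False using C by simp
qed

lemma closed_level:
  assumes F: "F \<subseteq> Pow {1..n}"
    and all: "\<forall>\<sigma>\<in>permutations_of_set {1..n}. fsig F \<sigma> = 1"
  shows "A \<in> F \<Longrightarrow> B \<subseteq> {1..n} \<Longrightarrow> card B = card A \<Longrightarrow> B \<in> F"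
proof (induction "card (A - B)" arbitrary: A rule: less_induct)
  case less
  have Asub: "A \<subseteq> {1..n}" using less F by auto
  have finA: "finite A" and finB: "finite B" using Asub less(3) finite_subset by blast+
  show ?case
  proof (cases "A - B = {}")
    case True
    then have "A \<subseteq> B" by auto
    then show ?thesis using less card_subset_eq[OF finB] by metis
  next
    case False
    then obtain a where a: "a \<in> A" "a \<notin> B" by auto
    have "B - A \<noteq> {}"
    proof
      assume "B - A = {}"
      then have "B \<subset> A" using a by auto
      then have "card B < card A" using finA psubset_card_mono by blast
      then show False using less by simp
    qed
    then obtain b where b: "b \<in> B" "b \<notin> A" by auto
    define A' where "A' = insert b (A - {a})"
    have A'F: "A' \<in> F" unfolding A'_def using swap_closed[OF F all less(2) a(1)] b less(3) by auto
    have "card A' = card A" unfolding A'_def using finA a b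
      by (simp add: card_insert_disjoint card_Diff_singleton)
        (metis card_Diff1_less card_gt_0_iff Suc_pred empty_iff)
    moreover have "card (A' - B) < card (A - B)"
    proof -
      have "A' - B = (A - B) - {a}" unfolding A'_def using b by auto
      moreover have "a \<in> A - B" using a by auto
      ultimately show ?thesis using finA by (metis card_Diff1_less finite_Diff)
    qed
    ultimately show ?thesis using less(1)[OF _ A'F less(3)] less(4) by simp
  qed
qed


lemma levels_fsig:
  assumes I: "I \<noteq> {}" "I \<subseteq> {0..n}" and F: "F = (\<Union>i\<in>I. level n i)"
    and s: "\<sigma> \<in> permutations_of_set {1..n}"
  shows "fsig F \<sigma> = 1"
proof -
  note p = perm_props[OF s]
  have Fsub: "F \<subseteq> Pow {1..n}" using F by (auto simp: level_def)
  have finF: "finite F" using Fsub by (rule finite_subset) auto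
  have finI: "finite I" using I finite_subset by blast
  have memF: "C \<in> F \<longleftrightarrow> C \<subseteq> {1..n} \<and> card C \<in> I" for C using F by (auto simp: level_def)
  have tk: "set (take k \<sigma>) \<subseteq> {1..n}" for k using set_take_subset[of k \<sigma>] p(3) by simp
  have S: "Ssig F \<sigma> = (\<lambda>k. set (take k \<sigma>)) ` I"
  proof
    show "Ssig F \<sigma> \<subseteq> (\<lambda>k. set (take k \<sigma>)) ` I"
    proof
      fix C assume "C \<in> Ssig F \<sigma>"
      then have C: "C \<in> F" "set (take (card C) \<sigma>) = C" by (auto simp: Ssig_def)
      then have "card C \<in> I" using memF by blast
      then show "C \<in> (\<lambda>k. set (take k \<sigma>)) ` I" by (rule rev_image_eqI) (simp add: C(2))
    qed
  next
    show "(\<lambda>k. set (take k \<sigma>)) ` I \<subseteq> Ssig F \<sigma>"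
    proof clarify
      fix k assume k: "k \<in> I"
      then have "k \<le> n" using I by auto
      then have c: "card (set (take k \<sigma>)) = k" using card_take_set[OF p(1), of k] p(2) by simp
      then show "set (take k \<sigma>) \<in> Ssig F \<sigma>" using memF tk k by (simp add: Ssig_def)
    qed
  qed
  have inj: "inj_on (\<lambda>k. set (take k \<sigma>)) I"
  proof (rule inj_onI)
    fix x y assume "x \<in> I" "y \<in> I" "set (take x \<sigma>) = set (take y \<sigma>)"
    moreover have "x \<le> n" "y \<le> n" using I \<open>x\<in>I\<close> \<open>y\<in>I\<close> by auto
    ultimately show "x = y" using card_take_set[OF p(1), of x] card_take_set[OF p(1), of y] p(2)
      by (metis)
  qed
  have cS: "card (Ssig F \<sigma>) = card I" using S card_image[OF inj] by simp
  have rk: "chain_rank F A = card I" if A: "A \<in> Ssig F \<sigma>" for A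
  proof (rule antisym)
    have "A \<in> F" using A by (simp add: Ssig_def)
    show "chain_rank F A \<le> card I"
    proof (rule rank_le[OF finF \<open>A \<in> F\<close>])
      fix cs assume ch: "is_chain_in F cs"
      have "sorted_wrt (\<lambda>X Y. card X < card Y) cs"
      proof (rule sorted_wrt_mono_rel[of cs "(\<subset>)"])
        fix X Y assume "X \<in> set cs" "Y \<in> set cs" "X \<subset> Y"
        moreover have "Y \<in> F" using \<open>Y \<in> set cs\<close> ch by (auto simp: is_chain_in_def)
        then have "finite Y" using Fsub finite_subset by blast
        ultimately show "card X < card Y" by (simp add: psubset_card_mono)
      qed (use ch in \<open>simp add: is_chain_in_def\<close>)
      then have "sorted_wrt (<) (map card cs)" by (simp add: sorted_wrt_map)
      then have "distinct (map card cs)" by (simp add: strict_sorted_iff)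
      then have "length cs = card (set (map card cs))" by (metis distinct_card length_map)
      also have "\<dots> \<le> card I" 
      proof (rule card_mono[OF finI])
        show "set (map card cs) \<subseteq> I" using ch memF by (auto simp: is_chain_in_def)
      qed
      finally show "length cs \<le> card I" .
    qed
    show "card I \<le> chain_rank F A" using sig_chain[OF Fsub s A] cS by simp
  qed
  have "card I > 0" using I finI by auto
  then show ?thesis unfolding fsig_def using rk cS by simp
qed

theorem theorem4:
  fixes n :: nat and \<A> :: "nat set set"
  assumes "\<A> \<subseteq> Pow {1..n}"
  shows "(\<Sum>A\<in>\<A>. 1 / (real (n choose card A) * real (chain_rank \<A> A))) \<le> 1 \<and>
         ((\<Sum>A\<in>\<A>. 1 / (real (n choose card A) * real (chain_rank \<A> A))) = 1 \<longleftrightarrow>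
         (\<exists>I. I \<noteq> {} \<and> I \<subseteq> {0..n} \<and> \<A> = (\<Union>i\<in>I. level n i)))"
proof -
  let ?T = "(\<Sum>A\<in>\<A>. 1 / (real (n choose card A) * real (chain_rank \<A> A)))"
  let ?P = "permutations_of_set {1..n}"
  have key: "?T * fact n = (\<Sum>\<sigma>\<in>?P. fsig \<A> \<sigma>)" by (rule key_identity[OF assms])
  have cP: "real (card ?P) = fact n" by simp
  have fn: "(fact n :: real) > 0" by simp
  have le: "(\<Sum>\<sigma>\<in>?P. fsig \<A> \<sigma>) \<le> fact n"
    using sum_mono[of ?P "fsig \<A>" "\<lambda>_. 1"] fsig_le1(1)[OF assms] cP by simp
  have "?T * fact n \<le> 1 * fact n" using key le by simp
  then have T1: "?T \<le> 1" using fn by (simp only: mult_le_cancel_right)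
  have eq1: "?T = 1 \<longleftrightarrow> (\<forall>\<sigma>\<in>?P. fsig \<A> \<sigma> = 1)"
  proof
    assume "?T = 1"
    then have "(\<Sum>\<sigma>\<in>?P. 1 - fsig \<A> \<sigma>) = 0" using key cP by (simp add: sum_subtractf)
    then have "\<forall>\<sigma>\<in>?P. 1 - fsig \<A> \<sigma> = 0"
      using sum_nonneg_eq_0_iff[of ?P "\<lambda>\<sigma>. 1 - fsig \<A> \<sigma>"] fsig_le1(1)[OF assms] by auto
    then show "\<forall>\<sigma>\<in>?P. fsig \<A> \<sigma> = 1" by auto
  next
    assume "\<forall>\<sigma>\<in>?P. fsig \<A> \<sigma> = 1"
    then have "(\<Sum>\<sigma>\<in>?P. fsig \<A> \<sigma>) = fact n" using cP by simp
    then show "?T = 1" using key fn by simp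
  qed
  have eq2: "(\<forall>\<sigma>\<in>?P. fsig \<A> \<sigma> = 1) \<longleftrightarrow> (\<exists>I. I \<noteq> {} \<and> I \<subseteq> {0..n} \<and> \<A> = (\<Union>i\<in>I. level n i))"
  proof
    assume all: "\<forall>\<sigma>\<in>?P. fsig \<A> \<sigma> = 1"
    have "?P \<noteq> {}" by simp
    then obtain \<sigma>0 where s0: "\<sigma>0 \<in> ?P" by blast
    have "Ssig \<A> \<sigma>0 \<noteq> {}" using fsig_le1(2)[OF assms s0] all s0 by auto
    then have ne: "\<A> \<noteq> {}" by (auto simp: Ssig_def)
    have cle: "card A \<le> n" if "A \<in> \<A>" for A using that assms
      by (metis PowD card_atLeastAtMost card_mono diff_Suc_1 finite_atLeastAtMost subsetD)
    have eqA: "\<A> = (\<Union>i\<in>card ` \<A>. level n i)"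
    proof
      show "\<A> \<subseteq> (\<Union>i\<in>card ` \<A>. level n i)" using assms by (auto simp: level_def)
      show "(\<Union>i\<in>card ` \<A>. level n i) \<subseteq> \<A>"
      proof
        fix B assume "B \<in> (\<Union>i\<in>card ` \<A>. level n i)"
        then obtain A where "A \<in> \<A>" "B \<subseteq> {1..n}" "card B = card A" by (auto simp: level_def)
        then show "B \<in> \<A>" using closed_level[OF assms all] by blast
      qed
    qed
    have sub: "card ` \<A> \<subseteq> {0..n}" using cle by auto
    have ne': "card ` \<A> \<noteq> {}" using ne by simp
    show "\<exists>I. I \<noteq> {} \<and> I \<subseteq> {0..n} \<and> \<A> = (\<Union>i\<in>I. level n i)"
      by (rule exI[of _ "card ` \<A>"]) (intro conjI ne' sub eqA)
  next
    assume "\<exists>I. I \<noteq> {} \<and> I \<subseteq> {0..n} \<and> \<A> = (\<Union>i\<in>I. level n i)"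
    then obtain I where I: "I \<noteq> {}" "I \<subseteq> {0..n}" "\<A> = (\<Union>i\<in>I. level n i)" by blast
    show "\<forall>\<sigma>\<in>?P. fsig \<A> \<sigma> = 1" using levels_fsig[OF I] by blast
  qed
  show ?thesis using T1 eq1 eq2 by simp
qed

end
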